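(* Let $R$ be a commutative ring with unit, $\mathcal{P}$ a filtered poset, and $F\colon\mathcal{P}\to R\text{-mod}$ a weak Mackey functor with a quasi-unit. Then $F$ is cofibrant, i.e. the natural map $\operatorname{colim}_{\mathcal{P}_{<i}}F\to F(i)$ is injective for every $i\in\mathcal{P}$.
   Context: A filtered poset is a poset with a map $d\colon\mathcal{P}\to\mathbb{N}$ with $d(i)<d(j)$ whenever $i<j$. (Cofibrant refers to the Reedy model structure on $\operatorname{Fun}(\mathcal{P},\operatorname{Ch}(R))$, in which a functor is cofibrant exactly when these natural maps are injective.) $F(j<i)$ is the image of the arrow $j\to i$, $F(i<i)=1$. $\operatorname{Im}_F(j)=\sum_{k<j}\operatorname{Im}F(k<j)$. An endomorphism (automorphism) $\alpha$ of $F(i)$ is $F$-linear if for every $j<i$ there is an endomorphism (automorphism) $\beta$ of $F(j)$ with $\alpha\circ F(j<i)=F(j<i)\circ\beta$; write $\operatorname{End}^F(i)$, $\operatorname{Aut}^F(i)$. $F$ is a weak Mackey functor if for all $j<i$ there is an $R$-linear $G(j<i)\colon F(i)\to F(j)$ with $G(j<i)\circ F(j<i)=\alpha(i,j)\in\operatorname{End}^F(j)$, and for all $k<i$ with $j\not\le k$, $\operatorname{Im}(G(j<i)\circ F(k<i))\subseteq\operatorname{Im}_F(j)$; it has a quasi-unit if each $\alpha(i,j)\in\operatorname{Aut}^F(j)$. *)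

theory Defs
  imports "HOL-Algebra.Module" "HOL-Algebra.FiniteProduct"
begin

definition linear_map :: "('r, 'x) ring_scheme \<Rightarrow> ('r, 'm) module \<Rightarrow> ('r, 'm) module \<Rightarrow> ('m \<Rightarrow> 'm) \<Rightarrow> bool" where
  "linear_map R M N h \<longleftrightarrow>
     (\<forall>x \<in> carrier M. h x \<in> carrier N) \<and>
     (\<forall>x \<in> carrier M. \<forall>y \<in> carrier M. h (x \<oplus>\<^bsub>M\<^esub> y) = h x \<oplus>\<^bsub>N\<^esub> h y) \<and>
     (\<forall>a \<in> carrier R. \<forall>x \<in> carrier M. h (a \<odot>\<^bsub>M\<^esub> x) = a \<odot>\<^bsub>N\<^esub> h x)"

(* A filtered poset: a partial order (here the whole type 'p) with d : P -> N, i < j ==> d i < d j *)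
definition filtered_poset :: "'p::order itself \<Rightarrow> bool" where
  "filtered_poset _ \<longleftrightarrow> (\<exists>d :: 'p \<Rightarrow> nat. \<forall>i j. i < j \<longrightarrow> d i < d j)"

(* F : P -> R-mod.  M i is the module F(i), f j i is F(j < i) : F(j) -> F(i) for j \<le> i *)
definition is_functor :: "('r, 'x) ring_scheme \<Rightarrow> ('p::order \<Rightarrow> ('r, 'm) module) \<Rightarrow> ('p \<Rightarrow> 'p \<Rightarrow> 'm \<Rightarrow> 'm) \<Rightarrow> bool" where
  "is_functor R M f \<longleftrightarrow>
     (\<forall>i. module R (M i)) \<and>
     (\<forall>j i. j \<le> i \<longrightarrow> linear_map R (M j) (M i) (f j i)) \<and>
     (\<forall>i. \<forall>x \<in> carrier (M i). f i i x = x) \<and>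
     (\<forall>k j i. k \<le> j \<longrightarrow> j \<le> i \<longrightarrow> (\<forall>x \<in> carrier (M k). f j i (f k j x) = f k i x))"

definition EndF :: "('r, 'x) ring_scheme \<Rightarrow> ('p::order \<Rightarrow> ('r, 'm) module) \<Rightarrow> ('p \<Rightarrow> 'p \<Rightarrow> 'm \<Rightarrow> 'm) \<Rightarrow> 'p \<Rightarrow> ('m \<Rightarrow> 'm) set" where
  "EndF R M f i = {\<alpha>. linear_map R (M i) (M i) \<alpha> \<and>
     (\<forall>j. j < i \<longrightarrow> (\<exists>\<beta>. linear_map R (M j) (M j) \<beta> \<and>
         (\<forall>x \<in> carrier (M j). \<alpha> (f j i x) = f j i (\<beta> x))))}"

definition AutF :: "('r, 'x) ring_scheme \<Rightarrow> ('p::order \<Rightarrow> ('r, 'm) module) \<Rightarrow> ('p \<Rightarrow> 'p \<Rightarrow> 'm \<Rightarrow> 'm) \<Rightarrow> 'p \<Rightarrow> ('m \<Rightarrow> 'm) set" where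
  "AutF R M f i = {\<alpha>. linear_map R (M i) (M i) \<alpha> \<and> bij_betw \<alpha> (carrier (M i)) (carrier (M i)) \<and>
     (\<forall>j. j < i \<longrightarrow> (\<exists>\<beta>. linear_map R (M j) (M j) \<beta> \<and> bij_betw \<beta> (carrier (M j)) (carrier (M j)) \<and>
         (\<forall>x \<in> carrier (M j). \<alpha> (f j i x) = f j i (\<beta> x))))}"

(* Im_F(j) = sum over k < j of Im F(k < j)  (submodule sum = set of finite sums) *)
definition ImF :: "('p::order \<Rightarrow> ('r, 'm) module) \<Rightarrow> ('p \<Rightarrow> 'p \<Rightarrow> 'm \<Rightarrow> 'm) \<Rightarrow> 'p \<Rightarrow> 'm set" where
  "ImF M f j = {finsum (M j) (\<lambda>k. f k j (x k)) S | S x.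
       finite S \<and> S \<subseteq> {k. k < j} \<and> (\<forall>k \<in> S. x k \<in> carrier (M k))}"

(* Weak Mackey functor structure given by the maps G j i : F(i) -> F(j), j < i *)
definition weak_Mackey_with :: "('r, 'x) ring_scheme \<Rightarrow> ('p::order \<Rightarrow> ('r, 'm) module) \<Rightarrow> ('p \<Rightarrow> 'p \<Rightarrow> 'm \<Rightarrow> 'm) \<Rightarrow> ('p \<Rightarrow> 'p \<Rightarrow> 'm \<Rightarrow> 'm) \<Rightarrow> bool" where
  "weak_Mackey_with R M f G \<longleftrightarrow>
     (\<forall>j i. j < i \<longrightarrow>
        linear_map R (M i) (M j) (G j i) \<and>
        (\<exists>\<alpha> \<in> EndF R M f j. \<forall>x \<in> carrier (M j). G j i (f j i x) = \<alpha> x) \<and>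
        (\<forall>k. k < i \<and> \<not> j \<le> k \<longrightarrow> (\<lambda>x. G j i (f k i x)) ` carrier (M k) \<subseteq> ImF M f j))"

definition quasi_unit :: "('r, 'x) ring_scheme \<Rightarrow> ('p::order \<Rightarrow> ('r, 'm) module) \<Rightarrow> ('p \<Rightarrow> 'p \<Rightarrow> 'm \<Rightarrow> 'm) \<Rightarrow> ('p \<Rightarrow> 'p \<Rightarrow> 'm \<Rightarrow> 'm) \<Rightarrow> bool" where
  "quasi_unit R M f G \<longleftrightarrow>
     (\<forall>j i. j < i \<longrightarrow> (\<exists>\<alpha> \<in> AutF R M f j. \<forall>x \<in> carrier (M j). G j i (f j i x) = \<alpha> x))"

(* The colimit of F over P_{<i}, constructed as  (direct sum over k < i of F(k)) / relations *)
definition colim_fam :: "('p::order \<Rightarrow> ('r, 'm) module) \<Rightarrow> 'p \<Rightarrow> ('p \<Rightarrow> 'm) set" where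
  "colim_fam M i = {x. (\<forall>k. x k \<in> carrier (M k)) \<and> (\<forall>k. \<not> k < i \<longrightarrow> x k = \<zero>\<^bsub>M k\<^esub>) \<and>
                       finite {k. x k \<noteq> \<zero>\<^bsub>M k\<^esub>}}"

definition colim_gen :: "('p::order \<Rightarrow> ('r, 'm) module) \<Rightarrow> ('p \<Rightarrow> 'p \<Rightarrow> 'm \<Rightarrow> 'm) \<Rightarrow> 'p \<Rightarrow> 'p \<Rightarrow> 'm \<Rightarrow> 'p \<Rightarrow> 'm" where
  "colim_gen M f k l y = (\<lambda>m. if m = k then y else if m = l then \<ominus>\<^bsub>M l\<^esub> (f k l y) else \<zero>\<^bsub>M m\<^esub>)"

(* submodule of relations: generated (as a subgroup, which suffices) by the elementary relations *)
inductive_set colim_rel :: "('p::order \<Rightarrow> ('r, 'm) module) \<Rightarrow> ('p \<Rightarrow> 'p \<Rightarrow> 'm \<Rightarrow> 'm) \<Rightarrow> 'p \<Rightarrow> ('p \<Rightarrow> 'm) set"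
  for M f i where
  zero: "(\<lambda>m. \<zero>\<^bsub>M m\<^esub>) \<in> colim_rel M f i"
| step: "x \<in> colim_rel M f i \<Longrightarrow> k < l \<Longrightarrow> l < i \<Longrightarrow> y \<in> carrier (M k) \<Longrightarrow>
         (\<lambda>m. x m \<oplus>\<^bsub>M m\<^esub> colim_gen M f k l y m) \<in> colim_rel M f i"

(* natural map colim_{P<i} F -> F(i) on representatives *)
definition colim_map :: "('p::order \<Rightarrow> ('r, 'm) module) \<Rightarrow> ('p \<Rightarrow> 'p \<Rightarrow> 'm \<Rightarrow> 'm) \<Rightarrow> 'p \<Rightarrow> ('p \<Rightarrow> 'm) \<Rightarrow> 'm" where
  "colim_map M f i x = finsum (M i) (\<lambda>k. f k i (x k)) {k. x k \<noteq> \<zero>\<^bsub>M k\<^esub>}"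

(* cofibrant: the natural map colim_{P<i} F -> F(i) is injective for every i,
   i.e. representatives with the same image differ by a relation *)
definition cofibrant :: "('p::order \<Rightarrow> ('r, 'm) module) \<Rightarrow> ('p \<Rightarrow> 'p \<Rightarrow> 'm \<Rightarrow> 'm) \<Rightarrow> bool" where
  "cofibrant M f \<longleftrightarrow>
     (\<forall>i. \<forall>x \<in> colim_fam M i. \<forall>y \<in> colim_fam M i.
        colim_map M f i x = colim_map M f i y \<longrightarrow>
        (\<lambda>m. x m \<ominus>\<^bsub>M m\<^esub> y m) \<in> colim_rel M f i)"

end

theory Submission
  imports Defs
begin



lemma hom_zero:
  assumes "abelian_group A" "abelian_group B" "\<forall>x\<in>carrier A. h x \<in> carrier B"
    "\<forall>x\<in>carrier A. \<forall>y\<in>carrier A. h (x \<oplus>\<^bsub>A\<^esub> y) = h x \<oplus>\<^bsub>B\<^esub> h y"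
  shows "h \<zero>\<^bsub>A\<^esub> = \<zero>\<^bsub>B\<^esub>"
proof -
  interpret A: abelian_group A by fact
  interpret B: abelian_group B by fact
  have c: "h \<zero>\<^bsub>A\<^esub> \<in> carrier B" using assms by simp
  have "h \<zero>\<^bsub>A\<^esub> \<oplus>\<^bsub>B\<^esub> h \<zero>\<^bsub>A\<^esub> = h \<zero>\<^bsub>A\<^esub>"
    using assms(4) c by (metis A.l_zero A.zero_closed)
  then show ?thesis using c B.add.l_cancel_one by blast
qed

lemma hom_neg:
  assumes "abelian_group A" "abelian_group B" "\<forall>x\<in>carrier A. h x \<in> carrier B"
    "\<forall>x\<in>carrier A. \<forall>y\<in>carrier A. h (x \<oplus>\<^bsub>A\<^esub> y) = h x \<oplus>\<^bsub>B\<^esub> h y"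
    "x \<in> carrier A"
  shows "h (\<ominus>\<^bsub>A\<^esub> x) = \<ominus>\<^bsub>B\<^esub> h x"
proof -
  interpret A: abelian_group A by fact
  interpret B: abelian_group B by fact
  have "h (\<ominus>\<^bsub>A\<^esub> x) \<oplus>\<^bsub>B\<^esub> h x = h \<zero>\<^bsub>A\<^esub>"
    using assms(4,5) by (metis A.a_inv_closed A.l_neg)
  also have "\<dots> = \<zero>\<^bsub>B\<^esub>" using hom_zero assms(1-4) by blast
  finally show ?thesis using assms by (metis A.a_inv_closed B.minus_equality)
qed

lemma hom_finsum:
  assumes "abelian_group A" "abelian_group B" "\<forall>x\<in>carrier A. h x \<in> carrier B"
    "\<forall>x\<in>carrier A. \<forall>y\<in>carrier A. h (x \<oplus>\<^bsub>A\<^esub> y) = h x \<oplus>\<^bsub>B\<^esub> h y"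
    "finite S"
  shows "g \<in> S \<rightarrow> carrier A \<Longrightarrow> h (finsum A g S) = finsum B (\<lambda>k. h (g k)) S"
  using assms(5)
proof (induction S rule: finite_induct)
  case empty
  interpret A: abelian_group A by fact
  interpret B: abelian_group B by fact
  show ?case using hom_zero[OF assms(1-4)] by simp
next
  case (insert a S)
  interpret A: abelian_group A by fact
  interpret B: abelian_group B by fact
  have ga: "g a \<in> carrier A" and gS: "g \<in> S \<rightarrow> carrier A" using insert.prems by auto
  have hS: "(\<lambda>k. h (g k)) \<in> S \<rightarrow> carrier B" using gS assms(3) by auto
  have "h (finsum A g (insert a S)) = h (g a \<oplus>\<^bsub>A\<^esub> finsum A g S)"
    using insert ga gS by (simp add: A.finsum_insert)
  also have "\<dots> = h (g a) \<oplus>\<^bsub>B\<^esub> h (finsum A g S)"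
    using assms(4) ga gS A.finsum_closed by blast
  also have "\<dots> = h (g a) \<oplus>\<^bsub>B\<^esub> finsum B (\<lambda>k. h (g k)) S" using insert.IH gS by simp
  also have "\<dots> = finsum B (\<lambda>k. h (g k)) (insert a S)"
    using insert hS ga assms(3) by (simp add: B.finsum_insert)
  finally show ?case .
qed

lemma finsum_neg:
  assumes "abelian_group A" "finite S" "g \<in> S \<rightarrow> carrier A"
  shows "\<ominus>\<^bsub>A\<^esub> finsum A g S = finsum A (\<lambda>k. \<ominus>\<^bsub>A\<^esub> g k) S"
proof -
  interpret A: abelian_group A by fact
  show ?thesis
    by (rule hom_finsum[OF assms(1) assms(1) _ _ assms(2,3)]) (auto simp: A.minus_add A.a_comm)
qed




locale wmk =
  fixes R :: "('r, 'x) ring_scheme" and M :: "'p::order \<Rightarrow> ('r, 'm) module"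
    and f :: "'p \<Rightarrow> 'p \<Rightarrow> 'm \<Rightarrow> 'm" and G :: "'p \<Rightarrow> 'p \<Rightarrow> 'm \<Rightarrow> 'm" and d :: "'p \<Rightarrow> nat"
  assumes fct: "is_functor R M f" and wm: "weak_Mackey_with R M f G" and qu: "quasi_unit R M f G"
    and dm: "\<And>a b. a < b \<Longrightarrow> d a < d b"
begin

lemma ab: "abelian_group (M m)"
proof -
  have "module R (M m)" using fct[unfolded is_functor_def] by (rule conjunct1[THEN spec])
  then show ?thesis by (rule module.axioms(2))
qed

lemma zc: "\<zero>\<^bsub>M k\<^esub> \<in> carrier (M k)"
  by (rule abelian_monoid.zero_closed[OF abelian_group.axioms(1)[OF ab]])

lemma ac: "x \<in> carrier (M k) \<Longrightarrow> y \<in> carrier (M k) \<Longrightarrow> x \<oplus>\<^bsub>M k\<^esub> y \<in> carrier (M k)"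
  by (rule abelian_monoid.a_closed[OF abelian_group.axioms(1)[OF ab]])

lemma nc: "x \<in> carrier (M k) \<Longrightarrow> \<ominus>\<^bsub>M k\<^esub> x \<in> carrier (M k)"
  by (rule abelian_group.a_inv_closed[OF ab])

lemma ImF_intro: "finite S \<Longrightarrow> S \<subseteq> {k. k < j} \<Longrightarrow> \<forall>k\<in>S. x k \<in> carrier (M k) \<Longrightarrow>
  y = finsum (M j) (\<lambda>k. f k j (x k)) S \<Longrightarrow> y \<in> ImF M f j"
  unfolding ImF_def by blast

lemma flin: "j \<le> i \<Longrightarrow> linear_map R (M j) (M i) (f j i)"
  using fct unfolding is_functor_def by blast

lemma fcar: "j \<le> i \<Longrightarrow> x \<in> carrier (M j) \<Longrightarrow> f j i x \<in> carrier (M i)"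
  using flin unfolding linear_map_def by blast

lemma fcarl: "j < i \<Longrightarrow> x \<in> carrier (M j) \<Longrightarrow> f j i x \<in> carrier (M i)"
  by (rule fcar) auto

lemma fadd: "j \<le> i \<Longrightarrow> x \<in> carrier (M j) \<Longrightarrow> y \<in> carrier (M j) \<Longrightarrow>
   f j i (x \<oplus>\<^bsub>M j\<^esub> y) = f j i x \<oplus>\<^bsub>M i\<^esub> f j i y"
  using flin unfolding linear_map_def by blast

lemma f0: "j \<le> i \<Longrightarrow> f j i \<zero>\<^bsub>M j\<^esub> = \<zero>\<^bsub>M i\<^esub>"
  by (rule hom_zero[OF ab ab]) (use fcar fadd in auto)

lemma f0l: "j < i \<Longrightarrow> f j i \<zero>\<^bsub>M j\<^esub> = \<zero>\<^bsub>M i\<^esub>"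
  by (rule f0) auto

lemma fneg: "j \<le> i \<Longrightarrow> x \<in> carrier (M j) \<Longrightarrow> f j i (\<ominus>\<^bsub>M j\<^esub> x) = \<ominus>\<^bsub>M i\<^esub> f j i x"
  by (rule hom_neg[OF ab ab]) (use fcar fadd in auto)

lemma fcomp: "k \<le> j \<Longrightarrow> j \<le> i \<Longrightarrow> x \<in> carrier (M k) \<Longrightarrow> f j i (f k j x) = f k i x"
  using fct unfolding is_functor_def by blast

lemma Glin: "j < i \<Longrightarrow> linear_map R (M i) (M j) (G j i)"
  using wm unfolding weak_Mackey_with_def by blast

lemma Gcar: "j < i \<Longrightarrow> x \<in> carrier (M i) \<Longrightarrow> G j i x \<in> carrier (M j)"
  using Glin unfolding linear_map_def by blast

lemma Gadd: "j < i \<Longrightarrow> x \<in> carrier (M i) \<Longrightarrow> y \<in> carrier (M i) \<Longrightarrow>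
   G j i (x \<oplus>\<^bsub>M i\<^esub> y) = G j i x \<oplus>\<^bsub>M j\<^esub> G j i y"
  using Glin unfolding linear_map_def by blast

lemma G0: "j < i \<Longrightarrow> G j i \<zero>\<^bsub>M i\<^esub> = \<zero>\<^bsub>M j\<^esub>"
  by (rule hom_zero[OF ab ab]) (use Gcar Gadd in auto)

lemma Gim: "j < i \<Longrightarrow> k < i \<Longrightarrow> \<not> j \<le> k \<Longrightarrow> x \<in> carrier (M k) \<Longrightarrow> G j i (f k i x) \<in> ImF M f j"
  using wm unfolding weak_Mackey_with_def by blast

lemma ImF_car: "y \<in> ImF M f j \<Longrightarrow> y \<in> carrier (M j)"
proof -
  interpret A: abelian_group "M j" by (rule ab)
  assume "y \<in> ImF M f j"
  then obtain S x where "y = finsum (M j) (\<lambda>k. f k j (x k)) S" "S \<subseteq> {k. k < j}" "\<forall>k\<in>S. x k \<in> carrier (M k)"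
    unfolding ImF_def by blast
  moreover have "(\<lambda>k. f k j (x k)) \<in> S \<rightarrow> carrier (M j)"
    using calculation(2,3) fcar by (simp add: Pi_def less_imp_le subset_iff)
  ultimately show ?thesis using A.finsum_closed by metis
qed

lemma ImF_zero: "\<zero>\<^bsub>M j\<^esub> \<in> ImF M f j"
proof -
  interpret A: abelian_group "M j" by (rule ab)
  show ?thesis by (rule ImF_intro[of "{}"]) auto
qed

lemma ImF_neg: "y \<in> ImF M f j \<Longrightarrow> \<ominus>\<^bsub>M j\<^esub> y \<in> ImF M f j"
proof -
  interpret A: abelian_group "M j" by (rule ab)
  assume "y \<in> ImF M f j"
  then obtain S x where y: "y = finsum (M j) (\<lambda>k. f k j (x k)) S" and S: "finite S" "S \<subseteq> {k. k < j}"
     and x: "\<forall>k\<in>S. x k \<in> carrier (M k)"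
    unfolding ImF_def by blast
  have "\<ominus>\<^bsub>M j\<^esub> y = finsum (M j) (\<lambda>k. \<ominus>\<^bsub>M j\<^esub> f k j (x k)) S"
    unfolding y using S x fcar by (intro finsum_neg[OF ab]) auto
  also have "\<dots> = finsum (M j) (\<lambda>k. f k j (\<ominus>\<^bsub>M k\<^esub> x k)) S"
    using S x fcar fneg by (intro A.finsum_cong') auto
  finally show ?thesis using S x nc by (intro ImF_intro[of S _ "\<lambda>k. \<ominus>\<^bsub>M k\<^esub> x k"]) auto
qed

lemma ImF_add: "y1 \<in> ImF M f j \<Longrightarrow> y2 \<in> ImF M f j \<Longrightarrow> y1 \<oplus>\<^bsub>M j\<^esub> y2 \<in> ImF M f j"
proof -
  interpret A: abelian_group "M j" by (rule ab)
  assume "y1 \<in> ImF M f j" "y2 \<in> ImF M f j"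
  then obtain S1 x1 S2 x2 where y1: "y1 = finsum (M j) (\<lambda>k. f k j (x1 k)) S1" and S1: "finite S1" "S1 \<subseteq> {k. k < j}"
     and x1: "\<forall>k\<in>S1. x1 k \<in> carrier (M k)"
     and y2: "y2 = finsum (M j) (\<lambda>k. f k j (x2 k)) S2" and S2: "finite S2" "S2 \<subseteq> {k. k < j}"
     and x2: "\<forall>k\<in>S2. x2 k \<in> carrier (M k)"
    unfolding ImF_def by blast
  define u1 where "u1 k = (if k \<in> S1 then x1 k else \<zero>\<^bsub>M k\<^esub>)" for k
  define u2 where "u2 k = (if k \<in> S2 then x2 k else \<zero>\<^bsub>M k\<^esub>)" for k
  define W where "W k = u1 k \<oplus>\<^bsub>M k\<^esub> u2 k" for k
  have u1c: "u1 k \<in> carrier (M k)" for k using x1 zc by (simp add: u1_def)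
  have u2c: "u2 k \<in> carrier (M k)" for k using x2 zc by (simp add: u2_def)
  have Wc: "W k \<in> carrier (M k)" for k using u1c u2c ac by (simp add: W_def)
  let ?S = "S1 \<union> S2"
  have fin: "finite ?S" and Sj: "?S \<subseteq> {k. k < j}" using S1 S2 by auto
  have "finsum (M j) (\<lambda>k. f k j (W k)) ?S = finsum (M j) (\<lambda>k. f k j (u1 k) \<oplus>\<^bsub>M j\<^esub> f k j (u2 k)) ?S"
    using Sj fadd u1c u2c fcar by (intro A.finsum_cong') (auto simp: W_def)
  also have "\<dots> = finsum (M j) (\<lambda>k. f k j (u1 k)) ?S \<oplus>\<^bsub>M j\<^esub> finsum (M j) (\<lambda>k. f k j (u2 k)) ?S"
    using Sj u1c u2c fcar by (intro A.finsum_addf) auto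
  also have "finsum (M j) (\<lambda>k. f k j (u1 k)) ?S = y1"
    unfolding y1 using fin Sj u1c x1 fcarl f0l
    by (intro A.add.finprod_mono_neutral_cong_right) (auto simp: u1_def)
  also have "finsum (M j) (\<lambda>k. f k j (u2 k)) ?S = y2"
    unfolding y2 using fin Sj u2c x2 fcarl f0l
    by (intro A.add.finprod_mono_neutral_cong_right) (auto simp: u2_def)
  finally show ?thesis using fin Sj Wc by (intro ImF_intro[of ?S _ W]) auto
qed

lemma ImF_finsum: "finite S \<Longrightarrow> (\<forall>k\<in>S. g k \<in> ImF M f j) \<Longrightarrow> finsum (M j) g S \<in> ImF M f j"
proof (induction S rule: finite_induct)
  case empty
  interpret A: abelian_group "M j" by (rule ab)
  show ?case using ImF_zero by simp
next
  case (insert a S)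
  interpret A: abelian_group "M j" by (rule ab)
  have "g \<in> S \<rightarrow> carrier (M j)" "g a \<in> carrier (M j)" using insert.prems ImF_car by auto
  then show ?case using insert ImF_add by (simp add: A.finsum_insert)
qed

end


context wmk begin

lemma AutF_pull:
  assumes "\<alpha> \<in> AutF R M f j" "y \<in> carrier (M j)" "\<alpha> y \<in> ImF M f j"
  shows "y \<in> ImF M f j"
proof -
  interpret A: abelian_group "M j" by (rule ab)
  from assms(1) have al: "linear_map R (M j) (M j) \<alpha>" and bij: "bij_betw \<alpha> (carrier (M j)) (carrier (M j))"
    and ex: "\<forall>k. \<exists>\<beta>. k < j \<longrightarrow> (bij_betw \<beta> (carrier (M k)) (carrier (M k)) \<and>
         (\<forall>x\<in>carrier (M k). \<alpha> (f k j x) = f k j (\<beta> x)))"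
    unfolding AutF_def by blast+
  from choice[OF ex] obtain B where B: "\<And>k. k < j \<Longrightarrow> bij_betw (B k) (carrier (M k)) (carrier (M k)) \<and>
         (\<forall>x\<in>carrier (M k). \<alpha> (f k j x) = f k j (B k x))"
    by blast
  obtain S w where y: "\<alpha> y = finsum (M j) (\<lambda>k. f k j (w k)) S" and S: "finite S" "S \<subseteq> {k. k<j}"
    and w: "\<forall>k\<in>S. w k \<in> carrier (M k)"
    using assms(3) unfolding ImF_def by blast
  define w' where "w' k = inv_into (carrier (M k)) (B k) (w k)" for k
  have img: "k \<in> S \<Longrightarrow> w k \<in> B k ` carrier (M k)" for k
    using B[of k] S w bij_betw_imp_surj_on by blast
  have w'c: "k \<in> S \<Longrightarrow> w' k \<in> carrier (M k)" for k
    unfolding w'_def using img inv_into_into by metis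
  have Bw': "k \<in> S \<Longrightarrow> B k (w' k) = w k" for k
    unfolding w'_def using img f_inv_into_f by metis
  let ?z = "finsum (M j) (\<lambda>k. f k j (w' k)) S"
  have fc: "(\<lambda>k. f k j (w' k)) \<in> S \<rightarrow> carrier (M j)" using w'c S fcarl by auto
  have zc: "?z \<in> carrier (M j)" using fc A.finsum_closed by blast
  have "\<alpha> ?z = finsum (M j) (\<lambda>k. \<alpha> (f k j (w' k))) S"
    by (rule hom_finsum[OF ab ab _ _ S(1) fc]) (use al in \<open>auto simp: linear_map_def\<close>)
  also have "\<dots> = finsum (M j) (\<lambda>k. f k j (w k)) S"
    using fc B Bw' w'c S w fcarl by (intro A.finsum_cong') auto
  finally have "\<alpha> ?z = \<alpha> y" using y by simp
  then have "?z = y" using bij_betw_imp_inj_on[OF bij] zc assms(2) inj_onD by metis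
  then show ?thesis using S w'c by (intro ImF_intro[of S _ w']) auto
qed

lemma mackey:
  assumes "x \<in> colim_fam M i" "colim_map M f i x = \<zero>\<^bsub>M i\<^esub>" "x j \<noteq> \<zero>\<^bsub>M j\<^esub>"
    "\<And>k. x k \<noteq> \<zero>\<^bsub>M k\<^esub> \<Longrightarrow> \<not> j < k"
  shows "x j \<in> ImF M f j"
proof -
  let ?s = "{k. x k \<noteq> \<zero>\<^bsub>M k\<^esub>}"
  have xc: "\<And>k. x k \<in> carrier (M k)" and xz: "\<And>k. \<not> k < i \<Longrightarrow> x k = \<zero>\<^bsub>M k\<^esub>" and fin: "finite ?s"
    using assms(1) unfolding colim_fam_def by (simp_all add: mem_Collect_eq)
  have ji: "j < i" using assms(3) xz by metis
  have si: "?s \<subseteq> {k. k < i}" using xz by blast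
  obtain \<alpha> where al: "\<alpha> \<in> AutF R M f j" "\<forall>y\<in>carrier (M j). G j i (f j i y) = \<alpha> y"
    using qu ji unfolding quasi_unit_def by blast
  have "linear_map R (M j) (M j) \<alpha>" using al(1) unfolding AutF_def by blast
  then have alc: "\<alpha> (x j) \<in> carrier (M j)" using xc unfolding linear_map_def by blast
  interpret A: abelian_group "M j" by (rule ab)
  have fc: "(\<lambda>k. f k i (x k)) \<in> ?s \<rightarrow> carrier (M i)" using si xc fcarl by auto
  have gc: "(\<lambda>k. G j i (f k i (x k))) \<in> ?s - {j} \<rightarrow> carrier (M j)" using fc Gcar ji by auto
  have "\<zero>\<^bsub>M j\<^esub> = G j i (colim_map M f i x)" using assms(2) G0 ji by simp
  also have "\<dots> = finsum (M j) (\<lambda>k. G j i (f k i (x k))) ?s" unfolding colim_map_def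
    by (rule hom_finsum[OF ab ab _ _ fin fc]) (use Gcar Gadd ji in auto)
  also have "?s = insert j (?s - {j})" using assms(3) by blast
  also have "finsum (M j) (\<lambda>k. G j i (f k i (x k))) (insert j (?s - {j}))
     = G j i (f j i (x j)) \<oplus>\<^bsub>M j\<^esub> finsum (M j) (\<lambda>k. G j i (f k i (x k))) (?s - {j})"
    using fin gc Gcar fcar ji xc by (intro A.finsum_insert) auto
  also have "G j i (f j i (x j)) = \<alpha> (x j)" using al xc by blast
  finally have eq: "\<alpha> (x j) \<oplus>\<^bsub>M j\<^esub> finsum (M j) (\<lambda>k. G j i (f k i (x k))) (?s - {j}) = \<zero>\<^bsub>M j\<^esub>" by (rule sym)
  have tI: "finsum (M j) (\<lambda>k. G j i (f k i (x k))) (?s - {j}) \<in> ImF M f j"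
  proof (rule ImF_finsum)
    show "finite (?s - {j})" using fin by simp
    show "\<forall>k\<in>?s - {j}. G j i (f k i (x k)) \<in> ImF M f j"
    proof
      fix k assume k: "k \<in> ?s - {j}"
      then have kne: "k \<noteq> j" "x k \<noteq> \<zero>\<^bsub>M k\<^esub>" by auto
      have "k < i" using kne(2) xz by metis
      moreover have "\<not> j \<le> k" using kne assms(4)[OF kne(2)] by (simp add: le_less)
      ultimately show "G j i (f k i (x k)) \<in> ImF M f j" using Gim ji xc by blast
    qed
  qed
  have "\<ominus>\<^bsub>M j\<^esub> finsum (M j) (\<lambda>k. G j i (f k i (x k))) (?s - {j}) = \<alpha> (x j)"
    using A.minus_equality[OF eq] ImF_car[OF tI] alc by blast
  then have "\<alpha> (x j) \<in> ImF M f j" using ImF_neg[OF tI] by simp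
  then show ?thesis using AutF_pull al(1) xc by blast
qed

end


context wmk begin

lemma cm_ext:
  assumes "\<forall>k. x k \<in> carrier (M k)" "finite T" "{k. x k \<noteq> \<zero>\<^bsub>M k\<^esub>} \<subseteq> T" "T \<subseteq> {k. k<i}"
  shows "colim_map M f i x = finsum (M i) (\<lambda>k. f k i (x k)) T"
proof -
  interpret I: abelian_group "M i" by (rule ab)
  show ?thesis unfolding colim_map_def
    by (rule I.add.finprod_mono_neutral_cong_left) (use assms fcarl f0l in auto)
qed

lemma gen_car: "k < l \<Longrightarrow> y \<in> carrier (M k) \<Longrightarrow> colim_gen M f k l y m \<in> carrier (M m)"
  unfolding colim_gen_def using zc nc fcarl by auto

lemma gen_sum:
  assumes "k < l" "l < i" "y \<in> carrier (M k)" "finite T" "k \<in> T" "l \<in> T" "T \<subseteq> {m. m<i}"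
  shows "finsum (M i) (\<lambda>m. f m i (colim_gen M f k l y m)) T = \<zero>\<^bsub>M i\<^esub>"
proof -
  interpret I: abelian_group "M i" by (rule ab)
  have kl: "k \<noteq> l" using assms(1) by auto
  have ki: "k < i" using assms(1,2) by auto
  have gc: "(\<lambda>m. f m i (colim_gen M f k l y m)) \<in> T \<rightarrow> carrier (M i)"
    using assms gen_car fcarl by auto
  have "finsum (M i) (\<lambda>m. f m i (colim_gen M f k l y m)) T
      = finsum (M i) (\<lambda>m. f m i (colim_gen M f k l y m)) {k, l}"
    by (rule I.add.finprod_mono_neutral_cong_right) (use assms gc f0l in \<open>auto simp: colim_gen_def\<close>)
  also have "\<dots> = f k i (colim_gen M f k l y k) \<oplus>\<^bsub>M i\<^esub> finsum (M i) (\<lambda>m. f m i (colim_gen M f k l y m)) {l}"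
    using kl gc assms by (intro I.finsum_insert) auto
  also have "finsum (M i) (\<lambda>m. f m i (colim_gen M f k l y m)) {l} = f l i (colim_gen M f k l y l)"
  proof -
    have c: "f l i (colim_gen M f k l y l) \<in> carrier (M i)" using gc assms(6) by blast
    show ?thesis using I.finsum_insert[of "{}" l "\<lambda>m. f m i (colim_gen M f k l y m)"] c by simp
  qed
  also have "f k i (colim_gen M f k l y k) \<oplus>\<^bsub>M i\<^esub> f l i (colim_gen M f k l y l) = f k i y \<oplus>\<^bsub>M i\<^esub> f l i (\<ominus>\<^bsub>M l\<^esub> f k l y)"
    using kl by (simp add: colim_gen_def)
  also have "\<dots> = f k i y \<oplus>\<^bsub>M i\<^esub> (\<ominus>\<^bsub>M i\<^esub> f k i y)"
    using assms fneg fcomp fcarl by (simp add: less_imp_le)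
  also have "\<dots> = \<zero>\<^bsub>M i\<^esub>" using assms fcarl ki by (simp add: I.r_neg)
  finally show ?thesis .
qed

lemma rel_unstep:
  assumes "\<forall>m. x m \<in> carrier (M m)" "k < l" "l < i" "y \<in> carrier (M k)"
    "(\<lambda>m. x m \<oplus>\<^bsub>M m\<^esub> colim_gen M f k l y m) \<in> colim_rel M f i"
  shows "x \<in> colim_rel M f i"
proof -
  have ny: "\<ominus>\<^bsub>M k\<^esub> y \<in> carrier (M k)" using nc assms by blast
  have "(\<lambda>m. (x m \<oplus>\<^bsub>M m\<^esub> colim_gen M f k l y m) \<oplus>\<^bsub>M m\<^esub> colim_gen M f k l (\<ominus>\<^bsub>M k\<^esub> y) m) \<in> colim_rel M f i"
    by (rule colim_rel.step[OF assms(5) assms(2) assms(3) ny])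
  also have "(\<lambda>m. (x m \<oplus>\<^bsub>M m\<^esub> colim_gen M f k l y m) \<oplus>\<^bsub>M m\<^esub> colim_gen M f k l (\<ominus>\<^bsub>M k\<^esub> y) m) = x"
  proof
    fix m
    interpret Am: abelian_group "M m" by (rule ab)
    have fy: "f k l y \<in> carrier (M l)" using fcarl assms by blast
    show "(x m \<oplus>\<^bsub>M m\<^esub> colim_gen M f k l y m) \<oplus>\<^bsub>M m\<^esub> colim_gen M f k l (\<ominus>\<^bsub>M k\<^esub> y) m = x m"
    proof (cases "m = k")
      case True
      interpret Ak: abelian_group "M k" by (rule ab)
      show ?thesis using assms True by (simp add: colim_gen_def Ak.a_assoc Ak.r_neg)
    next
      case False
      note mk = False
      show ?thesis
      proof (cases "m = l")
        case True
        interpret Al: abelian_group "M l" by (rule ab)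
        have "f k l (\<ominus>\<^bsub>M k\<^esub> y) = \<ominus>\<^bsub>M l\<^esub> f k l y" using fneg assms by (simp add: less_imp_le)
        then show ?thesis using assms mk True fy by (simp add: colim_gen_def Al.a_assoc Al.l_neg)
      next
        case False
        then show ?thesis using assms mk by (simp add: colim_gen_def)
      qed
    qed
  qed
  finally show ?thesis .
qed

end


context wmk begin

lemma rz: assumes "x \<in> carrier (M m)" shows "x \<oplus>\<^bsub>M m\<^esub> \<zero>\<^bsub>M m\<^esub> = x"
proof -
  interpret A: abelian_group "M m" by (rule ab)
  show ?thesis using assms by simp
qed

lemma mz: "\<zero>\<^bsub>M m\<^esub> \<ominus>\<^bsub>M m\<^esub> \<zero>\<^bsub>M m\<^esub> = \<zero>\<^bsub>M m\<^esub>"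
proof -
  interpret A: abelian_group "M m" by (rule ab)
  show ?thesis by (simp add: A.minus_eq)
qed

lemma push:
  assumes ji: "j < i"
    and H: "\<And>x'. x' \<in> colim_fam M i \<Longrightarrow> colim_map M f i x' = \<zero>\<^bsub>M i\<^esub> \<Longrightarrow> x' j = \<zero>\<^bsub>M j\<^esub> \<Longrightarrow>
       (\<forall>k. \<not> k < j \<longrightarrow> k \<noteq> j \<longrightarrow> x' k = x0 k) \<Longrightarrow> x' \<in> colim_rel M f i"
  shows "finite S \<Longrightarrow> S \<subseteq> {k. k < j} \<Longrightarrow> \<forall>k\<in>S. w k \<in> carrier (M k) \<Longrightarrow>
    x \<in> colim_fam M i \<Longrightarrow> colim_map M f i x = \<zero>\<^bsub>M i\<^esub> \<Longrightarrow>
    x j = finsum (M j) (\<lambda>k. f k j (w k)) S \<Longrightarrow> (\<forall>k. \<not> k < j \<longrightarrow> k \<noteq> j \<longrightarrow> x k = x0 k) \<Longrightarrow>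
    x \<in> colim_rel M f i"
proof (induction S arbitrary: x rule: finite_induct)
  case empty
  interpret A: abelian_group "M j" by (rule ab)
  have "x j = \<zero>\<^bsub>M j\<^esub>" using empty.prems(5) by simp
  then show ?case using H empty.prems by blast
next
  case (insert a S)
  note P = insert.prems
  interpret A: abelian_group "M j" by (rule ab)
  interpret I: abelian_group "M i" by (rule ab)
  have aj: "a < j" and wa: "w a \<in> carrier (M a)" and Sj: "S \<subseteq> {k. k<j}" and wS: "\<forall>k\<in>S. w k \<in> carrier (M k)"
    using P(1,2) by auto
  have ai: "a < i" using aj ji by (rule less_trans)
  have xc: "\<And>k. x k \<in> carrier (M k)" and xz: "\<And>k. \<not> k<i \<Longrightarrow> x k = \<zero>\<^bsub>M k\<^esub>"
    and xfin: "finite {k. x k \<noteq> \<zero>\<^bsub>M k\<^esub>}"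
    using P(3) unfolding colim_fam_def by (simp_all add: mem_Collect_eq)
  define g where "g m = colim_gen M f a j (w a) m" for m
  define x'' where "x'' = (\<lambda>m. x m \<oplus>\<^bsub>M m\<^esub> g m)"
  have gc: "\<And>m. g m \<in> carrier (M m)" unfolding g_def using gen_car aj wa by blast
  have g0: "\<And>m. m \<noteq> a \<Longrightarrow> m \<noteq> j \<Longrightarrow> g m = \<zero>\<^bsub>M m\<^esub>" unfolding g_def colim_gen_def by simp
  have x''c: "\<And>m. x'' m \<in> carrier (M m)" unfolding x''_def using xc gc ac by blast
  have x''o: "\<And>m. m \<noteq> a \<Longrightarrow> m \<noteq> j \<Longrightarrow> x'' m = x m" unfolding x''_def using g0 rz xc by simp
  have x''z: "\<And>m. \<not> m < i \<Longrightarrow> x'' m = \<zero>\<^bsub>M m\<^esub>"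
  proof -
    fix m assume m: "\<not> m < i"
    then have "m \<noteq> a" "m \<noteq> j" using ai ji by auto
    then show "x'' m = \<zero>\<^bsub>M m\<^esub>" using x''o xz m by simp
  qed
  let ?T = "{k. x k \<noteq> \<zero>\<^bsub>M k\<^esub>} \<union> {a, j}"
  have Tfin: "finite ?T" using xfin by simp
  have Ti: "?T \<subseteq> {k. k < i}" using xz ai ji by blast
  have sT: "{k. x'' k \<noteq> \<zero>\<^bsub>M k\<^esub>} \<subseteq> ?T"
  proof
    fix m assume "m \<in> {k. x'' k \<noteq> \<zero>\<^bsub>M k\<^esub>}"
    then show "m \<in> ?T" using x''o by (cases "m = a \<or> m = j") auto
  qed
  have x''f: "x'' \<in> colim_fam M i"
    unfolding colim_fam_def using x''c x''z finite_subset[OF sT Tfin] by blast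
  have fx: "(\<lambda>m. f m i (x m)) \<in> ?T \<rightarrow> carrier (M i)" using Ti xc fcarl by blast
  have fg: "(\<lambda>m. f m i (g m)) \<in> ?T \<rightarrow> carrier (M i)" using Ti gc fcarl by blast
  have fxg: "(\<lambda>m. f m i (x m) \<oplus>\<^bsub>M i\<^esub> f m i (g m)) \<in> ?T \<rightarrow> carrier (M i)"
    using fx fg by (auto intro: I.a_closed)
  have "colim_map M f i x'' = finsum (M i) (\<lambda>m. f m i (x'' m)) ?T"
    by (rule cm_ext[OF _ Tfin sT Ti]) (use x''c in blast)
  also have "\<dots> = finsum (M i) (\<lambda>m. f m i (x m) \<oplus>\<^bsub>M i\<^esub> f m i (g m)) ?T"
    using Ti xc gc fxg by (intro I.finsum_cong') (auto simp: x''_def fadd less_imp_le fx fg)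
  also have "\<dots> = finsum (M i) (\<lambda>m. f m i (x m)) ?T \<oplus>\<^bsub>M i\<^esub> finsum (M i) (\<lambda>m. f m i (g m)) ?T"
    using fx fg by (rule I.finsum_addf)
  also have "finsum (M i) (\<lambda>m. f m i (x m)) ?T = colim_map M f i x"
    by (rule cm_ext[symmetric, OF _ Tfin _ Ti]) (use xc in auto)
  also have "finsum (M i) (\<lambda>m. f m i (g m)) ?T = \<zero>\<^bsub>M i\<^esub>"
    unfolding g_def by (rule gen_sum[OF aj ji wa Tfin _ _ Ti]) auto
  finally have cm'': "colim_map M f i x'' = \<zero>\<^bsub>M i\<^esub>" using P(4) by simp
  have fa: "f a j (w a) \<in> carrier (M j)" using fcarl aj wa by blast
  have fS: "(\<lambda>k. f k j (w k)) \<in> S \<rightarrow> carrier (M j)" using Sj wS fcarl by blast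
  have sc: "finsum (M j) (\<lambda>k. f k j (w k)) S \<in> carrier (M j)" using fS by (rule A.finsum_closed)
  have "x'' j = x j \<oplus>\<^bsub>M j\<^esub> \<ominus>\<^bsub>M j\<^esub> f a j (w a)"
  proof -
    have "j \<noteq> a" using aj by simp
    then show ?thesis unfolding x''_def g_def colim_gen_def by simp
  qed
  also have "x j = f a j (w a) \<oplus>\<^bsub>M j\<^esub> finsum (M j) (\<lambda>k. f k j (w k)) S"
    using P(5) insert.hyps fa fS by (simp add: A.finsum_insert)
  finally have x''j: "x'' j = finsum (M j) (\<lambda>k. f k j (w k)) S"
    using fa sc by (simp add: A.a_ac A.r_neg A.r_neg2)
  have x''a: "\<forall>k. \<not> k < j \<longrightarrow> k \<noteq> j \<longrightarrow> x'' k = x0 k"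
  proof (intro allI impI)
    fix k assume k: "\<not> k < j" "k \<noteq> j"
    then have "k \<noteq> a" using aj by auto
    then show "x'' k = x0 k" using x''o k P(6) by simp
  qed
  have "x'' \<in> colim_rel M f i" using insert.IH[OF Sj wS x''f cm'' x''j x''a] .
  then show ?case unfolding x''_def g_def by (rule rel_unstep[OF _ aj ji wa, rotated]) (use xc in blast)
qed

end


context wmk begin

lemma main:
  shows "x \<in> colim_fam M i \<Longrightarrow> colim_map M f i x = \<zero>\<^bsub>M i\<^esub> \<Longrightarrow> x \<in> colim_rel M f i"
proof -
  have outer: "\<And>x. x \<in> colim_fam M i \<Longrightarrow> colim_map M f i x = \<zero>\<^bsub>M i\<^esub> \<Longrightarrow>
      (\<forall>k\<in>{k. x k \<noteq> \<zero>\<^bsub>M k\<^esub>}. d k < D) \<Longrightarrow> x \<in> colim_rel M f i" for D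
  proof (induction D)
    case 0
    have "x = (\<lambda>m. \<zero>\<^bsub>M m\<^esub>)"
    proof
      fix m show "x m = \<zero>\<^bsub>M m\<^esub>" using "0.prems"(3) by auto
    qed
    then show ?case using colim_rel.zero by simp
  next
    case (Suc D)
    note outerIH = Suc.IH
    have inner: "\<And>x. x \<in> colim_fam M i \<Longrightarrow> colim_map M f i x = \<zero>\<^bsub>M i\<^esub> \<Longrightarrow>
      (\<forall>k\<in>{k. x k \<noteq> \<zero>\<^bsub>M k\<^esub>}. d k < Suc D) \<Longrightarrow>
      card {k. x k \<noteq> \<zero>\<^bsub>M k\<^esub> \<and> d k = D} \<le> n \<Longrightarrow> x \<in> colim_rel M f i" for n
    proof (induction n)
      case 0
      have fin: "finite {k. x k \<noteq> \<zero>\<^bsub>M k\<^esub>}" using "0.prems"(1) unfolding colim_fam_def by simp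
      have "finite {k. x k \<noteq> \<zero>\<^bsub>M k\<^esub> \<and> d k = D}" by (rule finite_subset[OF _ fin]) auto
      then have "{k. x k \<noteq> \<zero>\<^bsub>M k\<^esub> \<and> d k = D} = {}" using "0.prems"(4) by simp
      then have "\<forall>k\<in>{k. x k \<noteq> \<zero>\<^bsub>M k\<^esub>}. d k < D"
      proof -
        assume e: "{k. x k \<noteq> \<zero>\<^bsub>M k\<^esub> \<and> d k = D} = {}"
        show ?thesis
        proof
          fix k assume k: "k \<in> {k. x k \<noteq> \<zero>\<^bsub>M k\<^esub>}"
          then have "d k < Suc D" using "0.prems"(3) by blast
          moreover have "d k \<noteq> D" using e k by blast
          ultimately show "d k < D" by simp
        qed
      qed
      then show ?case using outerIH "0.prems"(1,2) by blast
    next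
      case (Suc n)
      note P = Suc.prems
      let ?L = "{k. x k \<noteq> \<zero>\<^bsub>M k\<^esub> \<and> d k = D}"
      have xc: "\<And>k. x k \<in> carrier (M k)" and xz: "\<And>k. \<not> k<i \<Longrightarrow> x k = \<zero>\<^bsub>M k\<^esub>"
        and fin: "finite {k. x k \<noteq> \<zero>\<^bsub>M k\<^esub>}"
        using P(1) unfolding colim_fam_def by (simp_all add: mem_Collect_eq)
      have Lfin: "finite ?L" by (rule finite_subset[OF _ fin]) auto
      show ?case
      proof (cases "card ?L \<le> n")
        case True
        then show ?thesis using Suc.IH P(1-3) by blast
      next
        case False
        then have cL: "card ?L = Suc n" using P(4) by simp
        then obtain j where j: "j \<in> ?L" by (metis card.empty all_not_in_conv nat.distinct(1))
        have xj: "x j \<noteq> \<zero>\<^bsub>M j\<^esub>" and dj: "d j = D" using j by auto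
        have ji: "j < i" using xj xz by metis
        have nb: "\<And>k. x k \<noteq> \<zero>\<^bsub>M k\<^esub> \<Longrightarrow> \<not> j < k"
        proof
          fix k assume k: "x k \<noteq> \<zero>\<^bsub>M k\<^esub>" "j < k"
          then have "d j < d k" by (simp add: dm)
          moreover have "d k < Suc D" using P(3) k by blast
          ultimately show False using dj by simp
        qed
        have "x j \<in> ImF M f j" by (rule mackey[OF P(1) P(2) xj nb])
        then obtain S w where w: "x j = finsum (M j) (\<lambda>k. f k j (w k)) S" and S: "finite S" "S \<subseteq> {k. k < j}"
          and wc: "\<forall>k\<in>S. w k \<in> carrier (M k)"
          unfolding ImF_def by blast
        show ?thesis
        proof (rule push[OF ji _ S wc P(1) P(2) w])
          show "\<forall>k. \<not> k < j \<longrightarrow> k \<noteq> j \<longrightarrow> x k = x k" by simp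
        next
          fix x' assume x'f: "x' \<in> colim_fam M i" and x'cm: "colim_map M f i x' = \<zero>\<^bsub>M i\<^esub>"
            and x'j: "x' j = \<zero>\<^bsub>M j\<^esub>" and x'a: "\<forall>k. \<not> k < j \<longrightarrow> k \<noteq> j \<longrightarrow> x' k = x k"
          have b: "\<forall>k\<in>{k. x' k \<noteq> \<zero>\<^bsub>M k\<^esub>}. d k < Suc D"
          proof
            fix k assume k: "k \<in> {k. x' k \<noteq> \<zero>\<^bsub>M k\<^esub>}"
            show "d k < Suc D"
            proof (cases "k < j")
              case True
              then show ?thesis using dm[OF True] dj by simp
            next
              case False
              have "k \<noteq> j" using k x'j by auto
              then have "x' k = x k" using x'a False by blast
              then show ?thesis using P(3) k by auto
            qed
          qed
          have sub: "{k. x' k \<noteq> \<zero>\<^bsub>M k\<^esub> \<and> d k = D} \<subseteq> ?L - {j}"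
          proof
            fix k assume k: "k \<in> {k. x' k \<noteq> \<zero>\<^bsub>M k\<^esub> \<and> d k = D}"
            have nkj: "\<not> k < j"
            proof
              assume "k < j"
              then have "d k < d j" by (rule dm)
              then show False using k dj by simp
            qed
            have "k \<noteq> j" using k x'j by auto
            then have "x' k = x k" using x'a nkj by blast
            then show "k \<in> ?L - {j}" using k \<open>k \<noteq> j\<close> by auto
          qed
          have "card {k. x' k \<noteq> \<zero>\<^bsub>M k\<^esub> \<and> d k = D} \<le> card (?L - {j})"
            by (rule card_mono[OF _ sub]) (use Lfin in simp)
          also have "card (?L - {j}) = n" using cL j Lfin by simp
          finally show "x' \<in> colim_rel M f i" using Suc.IH x'f x'cm b by blast
        qed
      qed
    qed
    show ?case using inner[OF Suc.prems, of "card {k. x k \<noteq> \<zero>\<^bsub>M k\<^esub> \<and> d k = D}"] by simp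
  qed
  assume x: "x \<in> colim_fam M i" and cm: "colim_map M f i x = \<zero>\<^bsub>M i\<^esub>"
  let ?s = "{k. x k \<noteq> \<zero>\<^bsub>M k\<^esub>}"
  have fin: "finite ?s" using x unfolding colim_fam_def by simp
  have "\<forall>k\<in>?s. d k < Suc (Max (d ` ?s))"
  proof
    fix k assume "k \<in> ?s"
    then have "d k \<le> Max (d ` ?s)" using fin by (intro Max_ge) auto
    then show "d k < Suc (Max (d ` ?s))" by simp
  qed
  then show ?thesis using outer[OF x cm] by blast
qed

lemma diff_main:
  assumes x: "x \<in> colim_fam M i" and y: "y \<in> colim_fam M i" and eq: "colim_map M f i x = colim_map M f i y"
  shows "(\<lambda>m. x m \<ominus>\<^bsub>M m\<^esub> y m) \<in> colim_rel M f i"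
proof (rule main)
  interpret I: abelian_group "M i" by (rule ab)
  define z where "z = (\<lambda>m. x m \<ominus>\<^bsub>M m\<^esub> y m)"
  have xc: "\<And>k. x k \<in> carrier (M k)" and xz: "\<And>k. \<not> k<i \<Longrightarrow> x k = \<zero>\<^bsub>M k\<^esub>"
    and xfin: "finite {k. x k \<noteq> \<zero>\<^bsub>M k\<^esub>}"
    using x unfolding colim_fam_def by (simp_all add: mem_Collect_eq)
  have yc: "\<And>k. y k \<in> carrier (M k)" and yz: "\<And>k. \<not> k<i \<Longrightarrow> y k = \<zero>\<^bsub>M k\<^esub>"
    and yfin: "finite {k. y k \<noteq> \<zero>\<^bsub>M k\<^esub>}"
    using y unfolding colim_fam_def by (simp_all add: mem_Collect_eq)
  have zc: "\<And>m. z m \<in> carrier (M m)" unfolding z_def a_minus_def using ac nc xc yc by blast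
  let ?T = "{k. x k \<noteq> \<zero>\<^bsub>M k\<^esub>} \<union> {k. y k \<noteq> \<zero>\<^bsub>M k\<^esub>}"
  have Tfin: "finite ?T" using xfin yfin by simp
  have Ti: "?T \<subseteq> {k. k < i}" using xz yz by blast
  have sT: "{k. z k \<noteq> \<zero>\<^bsub>M k\<^esub>} \<subseteq> ?T" using mz unfolding z_def by auto
  have zz: "\<And>m. \<not> m < i \<Longrightarrow> z m = \<zero>\<^bsub>M m\<^esub>" unfolding z_def using xz yz mz by simp
  show "(\<lambda>m. x m \<ominus>\<^bsub>M m\<^esub> y m) \<in> colim_fam M i"
    unfolding z_def[symmetric] colim_fam_def using zc zz finite_subset[OF sT Tfin] by blast
  have fx: "(\<lambda>m. f m i (x m)) \<in> ?T \<rightarrow> carrier (M i)" using Ti xc fcarl by blast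
  have fy: "(\<lambda>m. f m i (y m)) \<in> ?T \<rightarrow> carrier (M i)" using Ti yc fcarl by blast
  have fny: "(\<lambda>m. \<ominus>\<^bsub>M i\<^esub> f m i (y m)) \<in> ?T \<rightarrow> carrier (M i)" using fy by auto
  have fxy: "(\<lambda>m. f m i (x m) \<oplus>\<^bsub>M i\<^esub> \<ominus>\<^bsub>M i\<^esub> f m i (y m)) \<in> ?T \<rightarrow> carrier (M i)"
    using fx fy by (intro Pi_I I.a_closed I.a_inv_closed) auto
  have "colim_map M f i z = finsum (M i) (\<lambda>m. f m i (z m)) ?T"
    by (rule cm_ext[OF _ Tfin sT Ti]) (use zc in blast)
  also have "\<dots> = finsum (M i) (\<lambda>m. f m i (x m) \<oplus>\<^bsub>M i\<^esub> \<ominus>\<^bsub>M i\<^esub> f m i (y m)) ?T"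
  proof (rule I.finsum_cong'[OF refl fxy])
    fix m assume m: "m \<in> ?T"
    then have mi: "m < i" using Ti by blast
    show "f m i (z m) = f m i (x m) \<oplus>\<^bsub>M i\<^esub> \<ominus>\<^bsub>M i\<^esub> f m i (y m)"
      unfolding z_def a_minus_def using mi xc yc nc fadd fneg by (simp add: less_imp_le)
  qed
  also have "\<dots> = finsum (M i) (\<lambda>m. f m i (x m)) ?T \<oplus>\<^bsub>M i\<^esub> finsum (M i) (\<lambda>m. \<ominus>\<^bsub>M i\<^esub> f m i (y m)) ?T"
    using fx fny by (rule I.finsum_addf)
  also have "finsum (M i) (\<lambda>m. \<ominus>\<^bsub>M i\<^esub> f m i (y m)) ?T = \<ominus>\<^bsub>M i\<^esub> finsum (M i) (\<lambda>m. f m i (y m)) ?T"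
    by (rule finsum_neg[OF ab Tfin fy, symmetric])
  also have "finsum (M i) (\<lambda>m. f m i (x m)) ?T = colim_map M f i x"
    by (rule cm_ext[symmetric, OF _ Tfin _ Ti]) (use xc in auto)
  also have "finsum (M i) (\<lambda>m. f m i (y m)) ?T = colim_map M f i y"
    by (rule cm_ext[symmetric, OF _ Tfin _ Ti]) (use yc in auto)
  finally have cz: "colim_map M f i z = colim_map M f i x \<oplus>\<^bsub>M i\<^esub> \<ominus>\<^bsub>M i\<^esub> colim_map M f i y" .
  have "(\<lambda>k. f k i (y k)) \<in> {k. y k \<noteq> \<zero>\<^bsub>M k\<^esub>} \<rightarrow> carrier (M i)"
  proof
    fix k assume "k \<in> {k. y k \<noteq> \<zero>\<^bsub>M k\<^esub>}"
    then have "k < i" using yz by blast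
    then show "f k i (y k) \<in> carrier (M i)" using fcarl yc by blast
  qed
  then have cyc: "colim_map M f i y \<in> carrier (M i)" unfolding colim_map_def by (rule I.finsum_closed)
  show "colim_map M f i (\<lambda>m. x m \<ominus>\<^bsub>M m\<^esub> y m) = \<zero>\<^bsub>M i\<^esub>"
    unfolding z_def[symmetric] cz eq using cyc by (rule I.r_neg)
qed

end

theorem lemma3p4:
  fixes R :: "('r, 'x) ring_scheme"
    and M :: "'p::order \<Rightarrow> ('r, 'm) module"
    and f :: "'p \<Rightarrow> 'p \<Rightarrow> 'm \<Rightarrow> 'm"
  assumes "cring R"
    and "filtered_poset TYPE('p)"
    and "is_functor R M f"
    and "\<exists>G. weak_Mackey_with R M f G \<and> quasi_unit R M f G"
  shows "cofibrant M f"
proof -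
  obtain G where G: "weak_Mackey_with R M f G" "quasi_unit R M f G" using assms(4) by blast
  obtain d :: "'p \<Rightarrow> nat" where d: "\<forall>i j. i < j \<longrightarrow> d i < d j"
    using assms(2) unfolding filtered_poset_def by blast
  interpret wmk R M f G d using assms(3) G d by unfold_locales auto
  show ?thesis unfolding cofibrant_def using diff_main by blast
qed



end
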